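(* Let $(K_n,\Sigma)$ be a signed complete graph with $n\geq4$, and let $Y(\Sigma)$ be the set of edges $vw$ of $K_n$ such that for every $u\in V(K_n)\setminus\{v,w\}$, the triangle $uvw$ is odd and the number of odd triangles containing $u$ and $v$ is one more than the number of even triangles containing $u$ and $v$. Then $|Y(\Sigma)|\leq1$.
   Context: A signed graph is a pair $(G,\Sigma)$ with $G$ a finite simple graph and $\Sigma\subseteq E(G)$ (the odd edges). A triangle $uvw$ is odd (resp. even) if $|\Sigma\cap\{uv,uw,vw\}|$ is odd (resp. even). *)

theory Defs
  imports Main
begin

text \<open>Signed complete graph on a finite vertex set V: edges are the 2-element subsets
  of V; the signature Sigma is a set of edges (the odd edges).\<close>

definition edges_K :: "'a set \<Rightarrow> 'a set set" where
  "edges_K V = {e. \<exists>v w. e = {v, w} \<and> v \<in> V \<and> w \<in> V \<and> v \<noteq> w}"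

definition odd_triangle :: "'a set set \<Rightarrow> 'a \<Rightarrow> 'a \<Rightarrow> 'a \<Rightarrow> bool" where
  "odd_triangle \<Sigma> u v w \<longleftrightarrow> odd (card (\<Sigma> \<inter> {{u, v}, {u, w}, {v, w}}))"

definition n_odd_tri :: "'a set \<Rightarrow> 'a set set \<Rightarrow> 'a \<Rightarrow> 'a \<Rightarrow> nat" where
  "n_odd_tri V \<Sigma> u v = card {x \<in> V - {u, v}. odd_triangle \<Sigma> u v x}"

definition n_even_tri :: "'a set \<Rightarrow> 'a set set \<Rightarrow> 'a \<Rightarrow> 'a \<Rightarrow> nat" where
  "n_even_tri V \<Sigma> u v = card {x \<in> V - {u, v}. \<not> odd_triangle \<Sigma> u v x}"

definition Y_set :: "'a set \<Rightarrow> 'a set set \<Rightarrow> 'a set set" where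
  "Y_set V \<Sigma> = {e. \<exists>v w. e = {v, w} \<and> v \<in> V \<and> w \<in> V \<and> v \<noteq> w \<and>
      (\<forall>u \<in> V - {v, w}. odd_triangle \<Sigma> u v w \<and>
          n_odd_tri V \<Sigma> u v = n_even_tri V \<Sigma> u v + 1)}"

end

theory Submission imports Defs begin

lemma ot_expand:
  assumes "a \<noteq> b" "a \<noteq> c" "b \<noteq> c"
  shows "odd_triangle S a b c \<longleftrightarrow> (({a,b}\<in>S) \<noteq> (({a,c}\<in>S) \<noteq> ({b,c}\<in>S)))"
  using assms
  by (cases "{a,b}\<in>S"; cases "{a,c}\<in>S"; cases "{b,c}\<in>S")
     (simp_all add: odd_triangle_def Int_insert_right doubleton_eq_iff)

lemma ot_swap12: "odd_triangle S a b c = odd_triangle S b a c"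
  unfolding odd_triangle_def by (simp add: insert_commute)

lemma ot_swap23: "odd_triangle S a b c = odd_triangle S a c b"
  unfolding odd_triangle_def by (simp add: insert_commute)

lemma ot_132: "odd_triangle S a b c = odd_triangle S a c b" by (rule ot_swap23)
lemma ot_213: "odd_triangle S a b c = odd_triangle S b a c" by (rule ot_swap12)
lemma ot_231: "odd_triangle S a b c = odd_triangle S b c a" unfolding odd_triangle_def by (simp add: insert_commute)
lemma ot_312: "odd_triangle S a b c = odd_triangle S c a b" unfolding odd_triangle_def by (simp add: insert_commute)
lemma ot_321: "odd_triangle S a b c = odd_triangle S c b a" unfolding odd_triangle_def by (simp add: insert_commute)

lemma ot_four:
  assumes "distinct [a,b,c,d]"
  shows "(odd_triangle S a b c \<noteq> odd_triangle S a b d) = (odd_triangle S a c d \<noteq> odd_triangle S b c d)"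
  using assms by (simp add: ot_expand insert_commute) blast

lemma card_split: "finite A \<Longrightarrow> card {x\<in>A. P x} + card {x\<in>A. \<not> P x} = card A"
proof -
  assume f: "finite A"
  have "A = {x\<in>A. P x} \<union> {x\<in>A. \<not> P x}" by auto
  then have "card A = card ({x\<in>A. P x} \<union> {x\<in>A. \<not> P x})" by simp
  also have "\<dots> = card {x\<in>A. P x} + card {x\<in>A. \<not> P x}"
    by (rule card_Un_disjoint) (use f in auto)
  finally show ?thesis by simp
qed

lemma card_xor: "finite A \<Longrightarrow> card {x\<in>A. g x \<noteq> h x} + 2 * card {x\<in>A. g x \<and> h x}
   = card {x\<in>A. g x} + card {x\<in>A. h x}"
proof -
  assume f: "finite A"
  have 1: "card {x\<in>A. g x} = card {x\<in>A. g x \<and> h x} + card {x\<in>A. g x \<and> \<not> h x}"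
  proof -
    have "{x\<in>{x\<in>A. g x}. h x} = {x\<in>A. g x \<and> h x}" "{x\<in>{x\<in>A. g x}. \<not> h x} = {x\<in>A. g x \<and> \<not> h x}" by auto
    then show ?thesis using card_split[of "{x\<in>A. g x}" h] f by simp
  qed
  have 2: "card {x\<in>A. h x} = card {x\<in>A. g x \<and> h x} + card {x\<in>A. \<not> g x \<and> h x}"
  proof -
    have "{x\<in>{x\<in>A. h x}. g x} = {x\<in>A. g x \<and> h x}" "{x\<in>{x\<in>A. h x}. \<not> g x} = {x\<in>A. \<not> g x \<and> h x}" by auto
    then show ?thesis using card_split[of "{x\<in>A. h x}" g] f by simp
  qed
  have "{x\<in>A. g x \<noteq> h x} = {x\<in>A. g x \<and> \<not> h x} \<union> {x\<in>A. \<not> g x \<and> h x}" by auto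
  then have 3: "card {x\<in>A. g x \<noteq> h x} = card {x\<in>A. g x \<and> \<not> h x} + card {x\<in>A. \<not> g x \<and> h x}"
    using f by (simp add: card_Un_disjoint disjoint_iff)
  show ?thesis using 1 2 3 by simp
qed


lemma Collect_insert_if: "{x\<in>insert a T. P x} = (if P a then insert a {x\<in>T. P x} else {x\<in>T. P x})"
  by auto

lemma twoO:
  assumes "finite V" "u\<in>V" "a\<in>V" "u\<noteq>a" "n_odd_tri V S u a = n_even_tri V S u a + 1"
  shows "2 * n_odd_tri V S u a + 1 = card V"
proof -
  have "n_odd_tri V S u a + n_even_tri V S u a = card (V - {u,a})"
    unfolding n_odd_tri_def n_even_tri_def using assms(1) by (intro card_split) simp
  moreover have "card (V - {u,a}) = card V - 2" using assms by (simp add: card_Diff_subset)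
  moreover have "card V \<ge> 2"
  proof -
    have "card {u,a} \<le> card V" using assms by (intro card_mono) auto
    then show ?thesis using assms by simp
  qed
  ultimately show ?thesis using assms(5) by linarith
qed

lemma full:
  assumes "finite V" "card V \<ge> 4" "z\<in>V" "a\<in>V" "z\<noteq>a"
    "n_odd_tri V S z a = n_even_tri V S z a + 1"
    "\<forall>x\<in>V-{z,a}. odd_triangle S z a x"
  shows False
proof -
  have "{x\<in>V-{z,a}. odd_triangle S z a x} = V - {z,a}" using assms(7) by auto
  then have "n_odd_tri V S z a = card V - 2"
    unfolding n_odd_tri_def using assms by (simp add: card_Diff_subset)
  with twoO[OF assms(1,3,4,5,6)] assms(2) show False by linarith
qed


lemma main:
  assumes fin: "finite V" and N4: "card V \<ge> 4"
    and vV: "v\<in>V" and wV: "w\<in>V" and v'V: "v'\<in>V" and w'V: "w'\<in>V"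
    and vw: "v\<noteq>w" and vw': "v'\<noteq>w'"
    and ne: "{v,w} \<noteq> {v',w'}"
    and C1: "\<forall>u\<in>V-{v,w}. odd_triangle S u v w \<and> n_odd_tri V S u v = n_even_tri V S u v + 1"
    and C2: "\<forall>u\<in>V-{v',w'}. odd_triangle S u v' w' \<and> n_odd_tri V S u v' = n_even_tri V S u v' + 1"
  shows False
proof -
  have C1t: "\<And>u. u\<in>V \<Longrightarrow> u\<noteq>v \<Longrightarrow> u\<noteq>w \<Longrightarrow> odd_triangle S u v w" using C1 by auto
  have C1o: "\<And>u. u\<in>V \<Longrightarrow> u\<noteq>v \<Longrightarrow> u\<noteq>w \<Longrightarrow> n_odd_tri V S u v = n_even_tri V S u v + 1" using C1 by auto
  have C2t: "\<And>u. u\<in>V \<Longrightarrow> u\<noteq>v' \<Longrightarrow> u\<noteq>w' \<Longrightarrow> odd_triangle S u v' w'" using C2 by auto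
  have C2o: "\<And>u. u\<in>V \<Longrightarrow> u\<noteq>v' \<Longrightarrow> u\<noteq>w' \<Longrightarrow> n_odd_tri V S u v' = n_even_tri V S u v' + 1" using C2 by auto
  have vv': "v \<noteq> v'"
  proof
    assume h: "v = v'"
    then have "w \<noteq> w'" using ne by auto
    show False
    proof (rule full[OF fin N4 w'V vV])
      show "w' \<noteq> v" using h vw' by simp
      show "n_odd_tri V S w' v = n_even_tri V S w' v + 1" using C1o[OF w'V] h vw' \<open>w\<noteq>w'\<close> by simp
      show "\<forall>x\<in>V-{w',v}. odd_triangle S w' v x"
      proof
        fix x assume "x\<in>V-{w',v}"
        then have "odd_triangle S x v w'" using C2t[of x] h by auto
        then show "odd_triangle S w' v x" using ot_321[of S x v w'] by simp
      qed
    qed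
  qed
  have vw'': "v \<noteq> w'"
  proof
    assume h: "v = w'"
    then have "w \<noteq> v'" using ne by auto
    show False
    proof (rule full[OF fin N4 v'V vV])
      show "v' \<noteq> v" using h vw' by simp
      show "n_odd_tri V S v' v = n_even_tri V S v' v + 1" using C1o[OF v'V] h vw' \<open>w\<noteq>v'\<close> by simp
      show "\<forall>x\<in>V-{v',v}. odd_triangle S v' v x"
      proof
        fix x assume "x\<in>V-{v',v}"
        then have "odd_triangle S x v' v" using C2t[of x] h by auto
        then show "odd_triangle S v' v x" using ot_231[of S x v' v] by simp
      qed
    qed
  qed
  have tvvw: "odd_triangle S v v' w'" using C2t[OF vV vv' vw''] .
  have twins: "\<And>u. u\<in>V \<Longrightarrow> u\<noteq>v \<Longrightarrow> u\<noteq>v' \<Longrightarrow> u\<noteq>w' \<Longrightarrow>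
      odd_triangle S v u v' = odd_triangle S v u w'"
  proof -
    fix u assume u: "u\<in>V" "u\<noteq>v" "u\<noteq>v'" "u\<noteq>w'"
    have "(odd_triangle S v u v' \<noteq> odd_triangle S v u w') = (odd_triangle S v v' w' \<noteq> odd_triangle S u v' w')"
      using u vv' vw'' vw' by (intro ot_four) auto
    then show "odd_triangle S v u v' = odd_triangle S v u w'" using tvvw C2t[OF u(1) u(3) u(4)] by simp
  qed
  have wv': "w \<noteq> v'"
  proof
    assume h: "w = v'"
    show False
    proof (rule full[OF fin N4 w'V vV])
      show "w' \<noteq> v" using vw'' by simp
      show "n_odd_tri V S w' v = n_even_tri V S w' v + 1" using C1o[OF w'V] h vw' vw'' by simp
      show "\<forall>x\<in>V-{w',v}. odd_triangle S w' v x"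
      proof
        fix x assume x: "x \<in> V-{w',v}"
        show "odd_triangle S w' v x"
        proof (cases "x = w")
          case True then show ?thesis using C1t[OF w'V] h vw' vw'' ot_132[of S w' v w] by simp
        next
          case False
          then have "odd_triangle S x v w" using C1t[of x] x by auto
          then have "odd_triangle S v x w" using ot_213[of S x v w] by simp
          then have "odd_triangle S v x w'" using twins[of x] x h False by auto
          then show ?thesis using ot_312[of S v x] by simp
        qed
      qed
    qed
  qed
  have ww': "w \<noteq> w'"
  proof
    assume h: "w = w'"
    show False
    proof (rule full[OF fin N4 v'V vV])
      show "v' \<noteq> v" using vv' by simp
      show "n_odd_tri V S v' v = n_even_tri V S v' v + 1" using C1o[OF v'V] h vw' vv' by simp
      show "\<forall>x\<in>V-{v',v}. odd_triangle S v' v x"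
      proof
        fix x assume x: "x \<in> V-{v',v}"
        show "odd_triangle S v' v x"
        proof (cases "x = w")
          case True then show ?thesis using C1t[OF v'V] h vw' vv' ot_132[of S v' v w] by simp
        next
          case False
          then have "odd_triangle S x v w" using C1t[of x] x by auto
          then have "odd_triangle S v x w" using ot_213[of S x v w] by simp
          then have "odd_triangle S v x v'" using twins[of x] x h False by auto
          then show ?thesis using ot_312[of S v x] by simp
        qed
      qed
    qed
  qed
  define N where "N = card V"
  define R where "R = V - {v,w,v',w'}"
  have O2: "\<And>u a. u\<in>V \<Longrightarrow> a\<in>V \<Longrightarrow> u\<noteq>a \<Longrightarrow> n_odd_tri V S u a = n_even_tri V S u a + 1 \<Longrightarrow>
     2 * n_odd_tri V S u a + 1 = N"
    unfolding N_def by (rule twoO[OF fin])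
  have Nv': "2 * n_odd_tri V S v' v + 1 = N"
  proof (rule O2[OF v'V vV])
    show "v' \<noteq> v" using vv' by simp
    show "n_odd_tri V S v' v = n_even_tri V S v' v + 1" by (rule C1o[OF v'V]) (use vv' wv' in auto)
  qed
  have c4: "card {v,w,v',w'} = 4" using vw vv' vw'' wv' ww' vw' by simp
  have sub4: "{v,w,v',w'} \<subseteq> V" using vV wV v'V w'V by simp
  have cardR: "card R = N - 4"
    unfolding R_def N_def using card_Diff_subset[OF _ sub4] c4 by simp
  have N4': "N \<ge> 4" using N4 N_def by simp
  have "card R \<noteq> 0" using cardR Nv' N4' by presburger
  then have "R \<noteq> {}" by (metis card.empty)
  then obtain u where uR: "u \<in> R" by blast
  have key: "\<And>u. u \<in> R \<Longrightarrow> odd_triangle S v u v' \<longleftrightarrow> (N - 1) mod 4 = 2"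
  proof -
    fix u assume uR: "u \<in> R"
    then have uV: "u\<in>V" and uv: "u\<noteq>v" "u\<noteq>w" "u\<noteq>v'" "u\<noteq>w'" unfolding R_def by auto
    define a where "a = odd_triangle S v u v'"
    define T where "T = V - {u,v',v}"
    have finT: "finite T" unfolding T_def using fin by simp
    have cardT: "card T = N - 3"
      unfolding T_def N_def using uV vV v'V uv vv' fin by (simp add: card_Diff_subset)
    define A where "A = {x\<in>T. odd_triangle S v u x}"
    define B where "B = {x\<in>T. odd_triangle S v v' x}"
    define D where "D = {x\<in>T. odd_triangle S v u x \<noteq> odd_triangle S v v' x}"
    define c where "c = card {x\<in>T. odd_triangle S v u x \<and> odd_triangle S v v' x}"
    have Dc: "card D + 2 * c = card A + card B"
      unfolding D_def c_def A_def B_def by (rule card_xor[OF finT])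
    have DT: "card {x\<in>T. odd_triangle S v u x = odd_triangle S v v' x} + card D = card T"
      unfolding D_def using card_split[OF finT, of "\<lambda>x. odd_triangle S v u x = odd_triangle S v v' x"] by simp
    have s1: "{x\<in>V-{u,v}. odd_triangle S u v x} = (if a then insert v' A else A)"
    proof -
      have eqV: "V-{u,v} = insert v' T" unfolding T_def using v'V uv vv' by auto
      show ?thesis unfolding eqV ot_213[of S u v] Collect_insert_if A_def a_def by (rule refl)
    qed
    have s2: "{x\<in>V-{v',v}. odd_triangle S v' v x} = (if a then insert u B else B)"
    proof -
      have eqV: "V-{v',v} = insert u T" unfolding T_def using uV uv vv' by auto
      have "odd_triangle S v v' u = a" unfolding a_def by (rule ot_132)
      then show ?thesis unfolding eqV ot_213[of S v' v] Collect_insert_if B_def by simp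
    qed
    have s3: "{x\<in>V-{u,v'}. odd_triangle S u v' x} = (if a then insert v {x\<in>T. odd_triangle S v u x = odd_triangle S v v' x} else D)"
    proof -
      have eqV: "V-{u,v'} = insert v T" unfolding T_def using vV uv vv' by auto
      have av: "odd_triangle S u v' v = a" unfolding a_def by (rule ot_312)
      have tx: "\<And>x. x \<in> T \<Longrightarrow> odd_triangle S u v' x = (odd_triangle S v v' x \<noteq> (a \<noteq> odd_triangle S v u x))"
      proof -
        fix x assume "x \<in> T"
        then have "(odd_triangle S v u v' \<noteq> odd_triangle S v u x) = (odd_triangle S v v' x \<noteq> odd_triangle S u v' x)"
          unfolding T_def using uv vv' by (intro ot_four) auto
        then show "odd_triangle S u v' x = (odd_triangle S v v' x \<noteq> (a \<noteq> odd_triangle S v u x))"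
          unfolding a_def by blast
      qed
      have "{x\<in>T. odd_triangle S u v' x} = (if a then {x\<in>T. odd_triangle S v u x = odd_triangle S v v' x} else D)"
        unfolding D_def using tx by (cases a) auto
      then show ?thesis unfolding eqV Collect_insert_if av by simp
    qed
    have vA: "v' \<notin> A" unfolding A_def T_def by simp
    have uB: "u \<notin> B" unfolding B_def T_def by simp
    have vT: "v \<notin> T" unfolding T_def by simp
    have e1: "2 * n_odd_tri V S u v + 1 = N" using O2[OF uV vV uv(1)] C1o[OF uV uv(1,2)] by simp
    have e2: "2 * n_odd_tri V S v' v + 1 = N" using Nv' .
    have e3: "2 * n_odd_tri V S u v' + 1 = N" using O2[OF uV v'V uv(3)] C2o[OF uV uv(3,4)] by simp
    show "odd_triangle S v u v' \<longleftrightarrow> (N - 1) mod 4 = 2"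
    proof (cases a)
      case True
      have O1: "n_odd_tri V S u v = card A + 1" unfolding n_odd_tri_def using s1 True vA finT A_def by simp
      moreover have "n_odd_tri V S v' v = card B + 1" unfolding n_odd_tri_def using s2 True uB finT B_def by simp
      moreover have "n_odd_tri V S u v' = card {x\<in>T. odd_triangle S v u x = odd_triangle S v v' x} + 1"
        unfolding n_odd_tri_def using s3 True vT finT by simp
      moreover have "N \<ge> 3" using e1 O1 by linarith
      ultimately have "N = 4 * c + 3" using e1 e2 e3 Dc DT cardT by linarith
      then have "N - 1 = 2 + 4 * c" by simp
      also have "(2 + 4 * c) mod 4 = 2" by (simp only: mod_mult_self2) simp
      finally have "(N - 1) mod 4 = 2" .
      then show ?thesis using True a_def by simp
    next
      case False
      have "n_odd_tri V S u v = card A" unfolding n_odd_tri_def using s1 False by simp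
      moreover have "n_odd_tri V S v' v = card B" unfolding n_odd_tri_def using s2 False by simp
      moreover have "n_odd_tri V S u v' = card D"
        unfolding n_odd_tri_def using s3 False by simp
      ultimately have "N = 4 * c + 1" using e1 e2 e3 Dc by linarith
      then have "(N - 1) mod 4 = 0" by simp
      then show ?thesis using False a_def by simp
    qed
  qed
  show False
  proof (cases "(N - 1) mod 4 = 2")
    case True
    have allR: "\<And>x. x\<in>R \<Longrightarrow> odd_triangle S v x v'" using key True by blast
    show False
    proof (rule full[OF fin N4 v'V vV])
      show "v' \<noteq> v" using vv' by simp
      show "n_odd_tri V S v' v = n_even_tri V S v' v + 1" by (rule C1o[OF v'V]) (use vv' wv' in auto)
      show "\<forall>x\<in>V-{v',v}. odd_triangle S v' v x"
      proof
        fix x assume x: "x\<in>V-{v',v}"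
        then consider "x=w" | "x=w'" | "x\<in>R" unfolding R_def by auto
        then show "odd_triangle S v' v x"
        proof cases
          case 1 then show ?thesis using C1t[OF v'V] vv' wv' by auto
        next
          case 2 then show ?thesis using tvvw ot_213[of S v v' w'] by simp
        next
          case 3 then show ?thesis using allR[OF 3] ot_312[of S v x v'] by simp
        qed
      qed
    qed
  next
    case False
    have noR: "\<And>x. x\<in>R \<Longrightarrow> \<not> odd_triangle S v x v'" using key False by blast
    have set1: "{x\<in>V-{v',v}. odd_triangle S v' v x} = {w,w'}"
    proof
      show "{x\<in>V-{v',v}. odd_triangle S v' v x} \<subseteq> {w,w'}"
      proof
        fix x assume x: "x \<in> {x\<in>V-{v',v}. odd_triangle S v' v x}"
        show "x \<in> {w,w'}"
        proof (rule ccontr)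
          assume "x \<notin> {w,w'}"
          then have "x \<in> R" using x unfolding R_def by auto
          then show False using noR[of x] x ot_312[of S v x v'] by simp
        qed
      qed
      show "{w,w'} \<subseteq> {x\<in>V-{v',v}. odd_triangle S v' v x}"
        using C1t[OF v'V] vv' wv' tvvw ot_213[of S v v' w'] wV w'V vw vw'' ww' wv' vw' by auto
    qed
    have "n_odd_tri V S v' v = 2" unfolding n_odd_tri_def set1 using ww' by simp
    then have N5: "N = 5" using Nv' by simp
    then have "card R = 1" using cardR by simp
    then obtain y where "R = {y}" by (rule card_1_singletonE)
    then have Ru: "R = {u}" using uR by simp
    have uV: "u\<in>V" and uv: "u\<noteq>v" "u\<noteq>w" "u\<noteq>v'" "u\<noteq>w'" using uR unfolding R_def by auto
    have e1: "2 * n_odd_tri V S u v + 1 = N" using O2[OF uV vV uv(1)] C1o[OF uV uv(1,2)] by simp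
    have sub: "{x\<in>V-{u,v}. odd_triangle S u v x} \<subseteq> {w}"
    proof
      fix x assume x: "x \<in> {x\<in>V-{u,v}. odd_triangle S u v x}"
      show "x \<in> {w}"
      proof (rule ccontr)
        assume xw: "x \<notin> {w}"
        have "x \<notin> R" using Ru x by auto
        then have "x = v' \<or> x = w'" using x xw unfolding R_def by auto
        moreover have "\<not> odd_triangle S u v v'" using noR[OF uR] ot_213[of S u v v'] by simp
        moreover have "\<not> odd_triangle S u v w'"
          using noR[OF uR] twins[OF uV uv(1,3,4)] ot_213[of S u v w'] by simp
        ultimately show False using x by auto
      qed
    qed
    have "n_odd_tri V S u v \<le> 1" unfolding n_odd_tri_def using card_mono[OF _ sub] by simp
    then show False using e1 N5 by simp
  qed
qed

theorem lemma3p4: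
  fixes V :: "'a set" and \<Sigma> :: "'a set set"
  assumes "finite V" and "card V \<ge> 4" and "\<Sigma> \<subseteq> edges_K V"
  shows "card (Y_set V \<Sigma>) \<le> 1"
proof (cases "finite (Y_set V \<Sigma>)")
  case False then show ?thesis by simp
next
  case True
  have "\<forall>e1\<in>Y_set V \<Sigma>. \<forall>e2\<in>Y_set V \<Sigma>. e1 = e2"
  proof (intro ballI)
    fix e1 e2 assume e1: "e1 \<in> Y_set V \<Sigma>" and e2: "e2 \<in> Y_set V \<Sigma>"
    obtain v w where h1: "e1 = {v,w}" "v\<in>V" "w\<in>V" "v\<noteq>w"
      "\<forall>u\<in>V-{v,w}. odd_triangle \<Sigma> u v w \<and> n_odd_tri V \<Sigma> u v = n_even_tri V \<Sigma> u v + 1"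
      using e1 unfolding Y_set_def by blast
    obtain v' w' where h2: "e2 = {v',w'}" "v'\<in>V" "w'\<in>V" "v'\<noteq>w'"
      "\<forall>u\<in>V-{v',w'}. odd_triangle \<Sigma> u v' w' \<and> n_odd_tri V \<Sigma> u v' = n_even_tri V \<Sigma> u v' + 1"
      using e2 unfolding Y_set_def by blast
    show "e1 = e2"
    proof (rule ccontr)
      assume "e1 \<noteq> e2"
      then have "{v,w} \<noteq> {v',w'}" using h1 h2 by simp
      then show False by (rule main[OF assms(1,2) h1(2,3) h2(2,3) h1(4) h2(4) _ h1(5) h2(5)])
    qed
  qed
  then have "card (Y_set V \<Sigma>) \<le> Suc 0" using card_le_Suc0_iff_eq[OF True] by blast
  then show ?thesis by simp
qed

end
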